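(* Let $V \ge 2$ be an integer, let $z \in \mathbb{R}^V$ be a logit vector and let $p = \mathrm{softmax}(z) \in \Delta^{V-1}$, i.e. $p_j = e^{z_j}/\sum_{k=1}^V e^{z_k}$. Define the token-wise self-certainty \[ \mathrm{SC}(p) = \mathrm{KL}(U \,\|\, p) = -\frac{1}{V}\sum_{j=1}^V \log\big(V\,p_j\big), \] where $U$ is the uniform distribution on $\{1,\dots,V\}$. Fix a target index $y^* \in \{1,\dots,V\}$ and consider the gradient-ascent direction on $\log p_{y^*}$ with respect to the logits, $\Delta z_k = \frac{\partial \log p_{y^*}}{\partial z_k} = \delta_{k,y^*} - p_k$ for $k=1,\dots,V$. For $\eta \ge 0$ set $z(\eta) = z + \eta\,\Delta z$ and $p(\eta) = \mathrm{softmax}(z(\eta))$. Then \[ \left.\frac{d}{d\eta}\mathrm{SC}\big(p(\eta)\big)\right|_{\eta=0} > 0 \quad\Longleftrightarrow\quad p_{y^*} > \|p\|_2^2 = \sum_{k=1}^V p_k^2 . \] That is, a gradient-ascent step on $\log p_{y^*}$ increases the self-certainty to first order in the step size if and only if $p_{y^*} > \|p\|_2^2$.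
   Context: $\delta_{k,y^*}$ is the Kronecker delta. $\Delta^{V-1}$ denotes the probability simplex in $\mathbb{R}^V$. *)

theory Defs
  imports "HOL-Analysis.Analysis"
begin

text \<open>Vocabulary indexed by {..<V} (0-based version of {1..V}).\<close>

definition softmax :: "nat \<Rightarrow> (nat \<Rightarrow> real) \<Rightarrow> nat \<Rightarrow> real" where
  "softmax V z j = exp (z j) / (\<Sum>k<V. exp (z k))"

definition self_certainty :: "nat \<Rightarrow> (nat \<Rightarrow> real) \<Rightarrow> real" where
  "self_certainty V p = - (1 / real V) * (\<Sum>j<V. ln (real V * p j))"

definition grad_dir :: "nat \<Rightarrow> (nat \<Rightarrow> real) \<Rightarrow> nat \<Rightarrow> nat \<Rightarrow> real" where
  "grad_dir V z y k = (if k = y then 1 else 0) - softmax V z k"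

end

theory Submission
  imports Defs
begin

theorem theorem1:
  fixes V :: nat and z :: "nat \<Rightarrow> real" and y :: nat
  assumes "V \<ge> 2" and "y < V"
  defines "p \<equiv> softmax V z"
  defines "SCpath \<equiv> (\<lambda>\<eta>::real. self_certainty V
             (softmax V (\<lambda>k. z k + \<eta> * grad_dir V z y k)))"
  shows "\<exists>D. (SCpath has_real_derivative D) (at 0 within {0..}) \<and>
             (D > 0 \<longleftrightarrow> p y > (\<Sum>k<V. (p k)\<^sup>2))"
proof -
  define g where "g = grad_dir V z y"
  define S where "S = (\<Sum>k<V. exp (z k))"
  have Vpos: "real V > 0" using assms(1) by simp
  have Spos: "\<And>w. (\<Sum>k<V. exp (w k :: real)) > 0"
    using assms by (intro sum_pos) auto
  define f where "f = (\<lambda>\<eta>::real. - (1 / real V) * (\<Sum>j<V. ln (real V) + (z j + \<eta> * g j))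
      + ln (\<Sum>k<V. exp (z k + \<eta> * g k)))"
  have eq: "SCpath = f"
  proof
    fix \<eta> :: real
    define w where "w = (\<lambda>k. z k + \<eta> * g k)"
    have l: "ln (real V * softmax V w j) = ln (real V) + w j - ln (\<Sum>k<V. exp (w k))" for j
      unfolding softmax_def using Vpos Spos[of w]
      by (simp add: ln_mult ln_div)
    have "SCpath \<eta> = - (1 / real V) * (\<Sum>j<V. ln (real V) + w j - ln (\<Sum>k<V. exp (w k)))"
      unfolding SCpath_def self_certainty_def w_def g_def using l[unfolded w_def g_def] by simp
    also have "\<dots> = - (1 / real V) * (\<Sum>j<V. ln (real V) + w j) + ln (\<Sum>k<V. exp (w k))"
      using Vpos by (simp add: sum_subtractf field_simps)
    finally show "SCpath \<eta> = f \<eta>" unfolding f_def w_def by simp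
  qed
  define D where "D = - (1 / real V) * (\<Sum>j<V. g j) + (\<Sum>k<V. exp (z k) * g k) / S"
  have der: "(f has_real_derivative D) (at 0)"
    unfolding f_def D_def S_def
    by (rule derivative_eq_intros refl | simp add: Spos)+
  have sp: "(\<Sum>k<V. p k) = 1"
    unfolding p_def softmax_def using Spos[of z] by (simp add: sum_divide_distrib[symmetric])
  have g0: "(\<Sum>j<V. g j) = 0"
    unfolding g_def grad_dir_def using assms(2) sp by (simp add: sum_subtractf p_def)
  have "(\<Sum>k<V. exp (z k) * g k) / S = (\<Sum>k<V. p k * g k)"
    unfolding p_def softmax_def S_def by (simp add: sum_divide_distrib)
  also have "\<dots> = p y - (\<Sum>k<V. (p k)\<^sup>2)"
  proof -
    have "(\<Sum>k<V. p k * g k) = (\<Sum>k<V. (if k = y then p k else 0) - (p k)\<^sup>2)"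
      unfolding g_def grad_dir_def p_def by (intro sum.cong) (auto simp: power2_eq_square algebra_simps)
    also have "\<dots> = p y - (\<Sum>k<V. (p k)\<^sup>2)"
      using assms(2) by (simp add: sum_subtractf)
    finally show ?thesis .
  qed
  finally have "D = p y - (\<Sum>k<V. (p k)\<^sup>2)" unfolding D_def using g0 by simp
  then show ?thesis using der eq
    by (intro exI[of _ D]) (auto intro: has_field_derivative_at_within)
qed

end
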